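(* Let $p>0$, $k>0$ and $q=p\,e^{-2k^2}$ with $0<pq<1$, let $\zeta\in\mathbb R$, $\varrho\in\mathbb C$, $t\in\mathbb C$, $x\in\mathbb R$, and assume $p\,e^{-(2\zeta-(\operatorname{Im}\varrho)^2)k^2}<1$. Then $$E^{(\zeta+\varrho^2/2)}_{p,q}\big(te^{-\varrho kx}\big)e^{-x^2/2}=\frac1{\sqrt{2\pi}}\int_{-\infty}^{\infty}e^{ixy-y^2/2}E^{(\zeta)}_{p,q}\big(te^{i\varrho ky}\big)\,dy,$$ where for complex $s$ we set $E^{(s)}_{p,q}(z)=\sum_{n\ge0}e^{-s k^2n^2}\frac{z^n}{[p,q;p,q]_n}$ (which agrees with the definition below when $s$ is real, since $q/p=e^{-2k^2}$).
   Context: $[p,q;p,q]_n=\prod_{l=1}^n(p^{-l}-q^l)$ ($=1$ for $n=0$). For real $\zeta$, $E^{(\zeta)}_{p,q}(z)=\sum_{n\ge0}\big(\frac qp\big)^{\zeta n^2/2}\frac{z^n}{[p,q;p,q]_n}$. *)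

theory Defs
  imports "HOL-Analysis.Analysis"
begin

definition pqpoch :: "real \<Rightarrow> real \<Rightarrow> nat \<Rightarrow> real" where
  "pqpoch p q n = (\<Prod>l=1..n. inverse (p ^ l) - q ^ l)"

definition E_cplx :: "real \<Rightarrow> real \<Rightarrow> real \<Rightarrow> complex \<Rightarrow> complex \<Rightarrow> complex" where
  "E_cplx k p q s z = (\<Sum>n. exp (- s * complex_of_real (k ^ 2 * real n ^ 2))
                          * z ^ n / complex_of_real (pqpoch p q n))"

end

theory Submission
  imports Defs "HOL-Probability.Characteristic_Functions" "HOL-Real_Asymp.Real_Asymp"
begin


lemma gauss0_int: "integrable lborel (\<lambda>u::real. exp (- (u^2) / 2))"
proof -
  have "integrable lborel (\<lambda>u. sqrt (2*pi) * std_normal_density u)" by simp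
  then show ?thesis by (simp add: std_normal_density_def)
qed

lemma gauss0: "(\<integral>u. exp (- (u^2) / 2) \<partial>lborel) = sqrt (2*pi)"
proof -
  have "(\<integral>u. exp (- (u^2) / 2) \<partial>lborel) = (\<integral>u. sqrt (2*pi) * std_normal_density u \<partial>lborel)"
    by (intro Bochner_Integration.integral_cong) (auto simp: std_normal_density_def)
  also have "\<dots> = sqrt (2*pi)" by simp
  finally show ?thesis .
qed

lemma char0:
  fixes c :: real
  shows "integrable lborel (\<lambda>u::real. complex_of_real (exp (- (u^2) / 2)) * exp (\<i> * complex_of_real (c*u)))"
    and "(\<integral>u. complex_of_real (exp (- (u^2) / 2)) * exp (\<i> * complex_of_real (c*u)) \<partial>lborel)
          = complex_of_real (sqrt (2*pi) * exp (- (c^2)/2))"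
proof -
  show int: "integrable lborel (\<lambda>u::real. complex_of_real (exp (- (u^2) / 2)) * exp (\<i> * complex_of_real (c*u)))"
    by (rule Bochner_Integration.integrable_bound[OF gauss0_int]) (auto simp: norm_mult)
  have "char std_normal_distribution c = complex_of_real (exp (- (c^2) / 2))"
    by (simp add: char_std_normal_distribution)
  moreover have "char std_normal_distribution c = (\<integral>u. std_normal_density u *\<^sub>R exp (\<i> * complex_of_real (c*u)) \<partial>lborel)"
    unfolding char_def by (subst integral_density) auto
  moreover have "(\<integral>u. std_normal_density u *\<^sub>R exp (\<i> * complex_of_real (c*u)) \<partial>lborel)
     = (\<integral>u. complex_of_real (1 / sqrt (2*pi)) * (complex_of_real (exp (- (u^2) / 2)) * exp (\<i> * complex_of_real (c*u))) \<partial>lborel)"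
    by (intro Bochner_Integration.integral_cong) (auto simp: std_normal_density_def scaleR_conv_of_real)
  moreover have "\<dots> = complex_of_real (1 / sqrt (2*pi)) * (\<integral>u. complex_of_real (exp (- (u^2) / 2)) * exp (\<i> * complex_of_real (c*u)) \<partial>lborel)"
    by simp
  ultimately show "(\<integral>u. complex_of_real (exp (- (u^2) / 2)) * exp (\<i> * complex_of_real (c*u)) \<partial>lborel)
          = complex_of_real (sqrt (2*pi) * exp (- (c^2)/2))"
    by (simp add: field_simps)
qed

lemma gaussR:
  fixes b :: real
  shows "integrable lborel (\<lambda>y::real. exp (b*y - y^2/2))"
    and "(\<integral>y. exp (b*y - y^2/2) \<partial>lborel) = sqrt (2*pi) * exp (b^2/2)"
proof -
  have eq: "exp (b*(b + 1*u) - (b + 1*u)^2/2) = exp (b^2/2) * exp (- (u^2) / 2)" for u :: real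
    by (subst exp_add[symmetric]) (simp add: power2_eq_square algebra_simps)
  have "integrable lborel (\<lambda>u. exp (b^2/2) * exp (- (u^2) / 2))"
    using gauss0_int by simp
  then have "integrable lborel (\<lambda>u. exp (b*(b + 1*u) - (b + 1*u)^2/2))"
    by (simp only: eq)
  then show "integrable lborel (\<lambda>y::real. exp (b*y - y^2/2))"
    using lborel_integrable_real_affine_iff[of 1 "\<lambda>y. exp (b*y - y^2/2)" b] by simp
  have "(\<integral>y. exp (b*y - y^2/2) \<partial>lborel) = \<bar>1\<bar> *\<^sub>R (\<integral>u. exp (b*(b + 1*u) - (b + 1*u)^2/2) \<partial>lborel)"
    by (rule lborel_integral_real_affine) simp
  also have "\<dots> = (\<integral>u. exp (b^2/2) * exp (- (u^2) / 2) \<partial>lborel)"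
    by (simp only: eq) simp
  also have "\<dots> = sqrt (2*pi) * exp (b^2/2)" using gauss0 by simp
  finally show "(\<integral>y. exp (b*y - y^2/2) \<partial>lborel) = sqrt (2*pi) * exp (b^2/2)" .
qed

lemma gaussC:
  fixes w :: complex
  shows "integrable lborel (\<lambda>y::real. exp (w * complex_of_real y - complex_of_real (y^2/2)))"
    and "(\<integral>y. exp (w * complex_of_real y - complex_of_real (y^2/2)) \<partial>lborel) = complex_of_real (sqrt (2*pi)) * exp (w^2/2)"
proof -
  define b where "b = Re w"
  define c where "c = Im w"
  have w: "w = complex_of_real b + \<i> * complex_of_real c" unfolding b_def c_def by (simp add: complex_eq_iff)
  have eq: "exp (w * complex_of_real (b + 1*u) - complex_of_real ((b + 1*u)^2/2))
      = exp (w * complex_of_real b - complex_of_real (b^2/2)) * (complex_of_real (exp (- (u^2) / 2)) * exp (\<i> * complex_of_real (c*u)))" for u :: real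
  proof -
    have "w * complex_of_real (b + 1*u) - complex_of_real ((b + 1*u)^2/2) = (w * complex_of_real b - complex_of_real (b^2/2)) + (complex_of_real (- (u^2) / 2) + \<i> * complex_of_real (c*u))"
      by (simp add: w power2_eq_square field_simps)
    then show ?thesis by (simp only: exp_add exp_of_real)
  qed
  have "integrable lborel (\<lambda>u. exp (w * complex_of_real b - complex_of_real (b^2/2)) * (complex_of_real (exp (- (u^2) / 2)) * exp (\<i> * complex_of_real (c*u))))"
    using char0(1)[of c] by simp
  then have "integrable lborel (\<lambda>u. exp (w * complex_of_real (b + 1*u) - complex_of_real ((b + 1*u)^2/2)))"
    by (simp only: eq)
  then show "integrable lborel (\<lambda>y::real. exp (w * complex_of_real y - complex_of_real (y^2/2)))"
    using lborel_integrable_real_affine_iff[of 1 "\<lambda>y. exp (w * complex_of_real y - complex_of_real (y^2/2))" b] by simp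
  have "(\<integral>y. exp (w * complex_of_real y - complex_of_real (y^2/2)) \<partial>lborel) = \<bar>1\<bar> *\<^sub>R (\<integral>u. exp (w * complex_of_real (b + 1*u) - complex_of_real ((b + 1*u)^2/2)) \<partial>lborel)"
    by (rule lborel_integral_real_affine) simp
  also have "\<dots> = (\<integral>u. exp (w * complex_of_real b - complex_of_real (b^2/2)) * (complex_of_real (exp (- (u^2) / 2)) * exp (\<i> * complex_of_real (c*u))) \<partial>lborel)"
    by (simp only: eq) simp
  also have "\<dots> = exp (w * complex_of_real b - complex_of_real (b^2/2)) * complex_of_real (sqrt (2*pi) * exp (- (c^2)/2))"
    using char0(2)[of c] by simp
  also have "\<dots> = complex_of_real (sqrt (2*pi)) * exp (w * complex_of_real b - complex_of_real (b^2/2) + complex_of_real (- (c^2)/2))"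
    by (simp only: exp_add exp_of_real of_real_mult mult_ac)
  also have "w * complex_of_real b - complex_of_real (b^2/2) + complex_of_real (- (c^2)/2) = w^2/2"
    by (simp add: w power2_eq_square algebra_simps)
  finally show "(\<integral>y. exp (w * complex_of_real y - complex_of_real (y^2/2)) \<partial>lborel) = complex_of_real (sqrt (2*pi)) * exp (w^2/2)" .
qed



lemma key_id:
  fixes \<zeta> k x c :: real and \<rho> t :: complex and n :: nat
  shows "exp (- (complex_of_real \<zeta> + \<rho>^2/2) * complex_of_real (k^2 * real n^2)) * (t * exp (- \<rho> * complex_of_real (k*x)))^n / complex_of_real c * complex_of_real (exp (- (x^2)/2))
   = (exp (- complex_of_real \<zeta> * complex_of_real (k^2 * real n^2)) * t^n / complex_of_real c) * exp ((\<i> * complex_of_real x + \<i> * \<rho> * complex_of_real (k * real n))^2/2)"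
proof -
  define a1 where "a1 = - (complex_of_real \<zeta> + \<rho>^2/2) * complex_of_real (k^2 * real n^2)"
  define a2 where "a2 = of_nat n * (- \<rho> * complex_of_real (k*x))"
  define a3 where "a3 = complex_of_real (- (x^2)/2)"
  define b1 where "b1 = - complex_of_real \<zeta> * complex_of_real (k^2 * real n^2)"
  define b2 where "b2 = (\<i> * complex_of_real x + \<i> * \<rho> * complex_of_real (k * real n))^2/2"
  have e1: "(t * exp (- \<rho> * complex_of_real (k*x)))^n = t^n * exp a2"
    unfolding a2_def by (simp only: power_mult_distrib exp_of_nat_mult)
  have e2: "complex_of_real (exp (- (x^2)/2)) = exp a3" unfolding a3_def by (simp only: exp_of_real)
  have "exp a1 * (t^n * exp a2) / complex_of_real c * exp a3 = t^n / complex_of_real c * exp (a1 + a2 + a3)"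
    by (simp add: exp_add)
  also have "a1 + a2 + a3 = b1 + b2"
    unfolding a1_def a2_def a3_def b1_def b2_def by (simp add: power2_eq_square field_simps)
  also have "t^n / complex_of_real c * exp (b1 + b2) = (exp b1 * t^n / complex_of_real c) * exp b2"
    by (simp add: exp_add)
  finally show ?thesis unfolding e1 e2 a1_def[symmetric] b1_def[symmetric] b2_def[symmetric] .
qed

lemma pqpoch_Suc: "pqpoch p q (Suc n) = pqpoch p q n * (inverse (p ^ Suc n) - q ^ Suc n)"
  unfolding pqpoch_def by (simp add: prod.cl_ivl_Suc)

lemma pqpoch_bound:
  assumes p: "p > 0" and pq: "0 < p*q" "p*q < 1"
  shows "pqpoch p q n \<ge> (1 - p*q)^n * exp (- ln p * (real n * (real n + 1) / 2))"
proof (induction n)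
  case 0 then show ?case by (simp add: pqpoch_def)
next
  case (Suc n)
  define m where "m = Suc n"
  have pm: "p ^ m = exp (real m * ln p)" using p by (simp add: exp_of_nat_mult)
  have "(p*q)^n \<le> 1" by (rule power_le_one) (use pq in auto)
  then have "p*q*(p*q)^n \<le> p*q" by (rule mult_left_le) (use pq in auto)
  then have "(p*q)^m \<le> p*q" unfolding m_def by simp
  then have "q^m * p^m \<le> p*q" by (simp add: power_mult_distrib mult.commute)
  then have fac: "inverse (p ^ m) - q ^ m \<ge> (1 - p*q) * exp (- ln p * real m)"
    using p by (simp add: pm exp_minus field_simps)
  have "(1 - p*q)^(Suc n) * exp (- ln p * (real (Suc n) * (real (Suc n) + 1) / 2))
      = ((1 - p*q)^n * exp (- ln p * (real n * (real n + 1) / 2))) * ((1 - p*q) * exp (- ln p * real m))"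
    unfolding m_def by (simp add: exp_add[symmetric] algebra_simps add_divide_distrib)
  also have "\<dots> \<le> pqpoch p q n * (inverse (p ^ m) - q ^ m)"
    by (rule mult_mono'[OF Suc.IH fac]) (use pq in auto)
  finally show ?case unfolding m_def pqpoch_Suc .
qed

lemma summable_gauss_seq:
  assumes a: "a > 0" and B: "B \<ge> 0"
  shows "summable (\<lambda>n::nat. B^n * exp (- a * real n ^ 2))"
proof -
  have lim: "(\<lambda>n::nat. B * exp (- a * real n)) \<longlonglongrightarrow> 0" using a by real_asymp
  have ev: "eventually (\<lambda>n. B * exp (- a * real n) < 1/2) sequentially"
    using order_tendstoD(2)[OF lim, of "1/2"] by simp
  have eq: "B^n * exp (- a * real n ^ 2) = (B * exp (- a * real n))^n" for n
  proof -
    have "(B * exp (- a * real n))^n = B^n * exp (of_nat n * (- a * real n))"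
      by (simp only: power_mult_distrib exp_of_nat_mult)
    also have "of_nat n * (- a * real n) = - a * real n ^ 2" by (simp add: power2_eq_square)
    finally show ?thesis by simp
  qed
  show ?thesis
  proof (rule summable_comparison_test_ev[of _ "\<lambda>n. (1/2)^n"])
    show "eventually (\<lambda>n. norm (B^n * exp (- a * real n ^ 2)) \<le> (1/2)^n) sequentially"
      using ev proof eventually_elim
      case (elim n)
      have "norm (B^n * exp (- a * real n ^ 2)) = (B * exp (- a * real n))^n" unfolding eq using B by simp
      also have "\<dots> \<le> (1/2)^n" by (rule power_mono) (use elim B in auto)
      finally show ?case .
    qed
  qed simp
qed


lemma fid_lemma:
  fixes \<zeta> k x y c :: real and \<rho> t :: complex and n :: nat
  shows "exp (- complex_of_real \<zeta> * complex_of_real (k^2 * real n^2)) * t^n / complex_of_real c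
      * exp ((\<i> * complex_of_real x + \<i> * \<rho> * complex_of_real (k * real n)) * complex_of_real y - complex_of_real (y^2/2))
    = exp (\<i> * complex_of_real (x * y) - complex_of_real (y ^ 2 / 2)) *
      (exp (- complex_of_real \<zeta> * complex_of_real (k^2 * real n^2)) * (t * exp (\<i> * \<rho> * complex_of_real (k * y)))^n / complex_of_real c)"
proof -
  define a0 where "a0 = \<i> * complex_of_real (x * y) - complex_of_real (y ^ 2 / 2)"
  define b1 where "b1 = - complex_of_real \<zeta> * complex_of_real (k^2 * real n^2)"
  define a2 where "a2 = of_nat n * (\<i> * \<rho> * complex_of_real (k * y))"
  define E where "E = (\<i> * complex_of_real x + \<i> * \<rho> * complex_of_real (k * real n)) * complex_of_real y - complex_of_real (y^2/2)"
  have e1: "(t * exp (\<i> * \<rho> * complex_of_real (k * y)))^n = t^n * exp a2"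
    unfolding a2_def by (simp only: power_mult_distrib exp_of_nat_mult)
  have "exp b1 * t^n / complex_of_real c * exp E = t^n / complex_of_real c * exp (b1 + E)"
    by (simp add: exp_add)
  also have "b1 + E = a0 + b1 + a2"
    unfolding a0_def b1_def a2_def E_def by (simp add: algebra_simps)
  also have "t^n / complex_of_real c * exp (a0 + b1 + a2) = exp a0 * (exp b1 * (t^n * exp a2) / complex_of_real c)"
    by (simp add: exp_add)
  finally show ?thesis unfolding e1 a0_def[symmetric] b1_def[symmetric] E_def[symmetric] .
qed

theorem mainTheorem7:
  fixes p k q \<zeta> x :: real and \<rho> t :: complex
  assumes "p > 0" and "k > 0" and "q = p * exp (- 2 * k ^ 2)"
    and "0 < p * q" and "p * q < 1"
    and "p * exp (- (2 * \<zeta> - (Im \<rho>) ^ 2) * k ^ 2) < 1"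
  shows "integrable lborel (\<lambda>y::real. exp (\<i> * complex_of_real (x * y) - complex_of_real (y ^ 2 / 2))
            * E_cplx k p q (complex_of_real \<zeta>) (t * exp (\<i> * \<rho> * complex_of_real (k * y))))
    \<and> E_cplx k p q (complex_of_real \<zeta> + \<rho> ^ 2 / 2) (t * exp (- \<rho> * complex_of_real (k * x)))
        * complex_of_real (exp (- (x ^ 2) / 2))
      = complex_of_real (1 / sqrt (2 * pi)) *
        integral\<^sup>L lborel (\<lambda>y::real. exp (\<i> * complex_of_real (x * y) - complex_of_real (y ^ 2 / 2))
            * E_cplx k p q (complex_of_real \<zeta>) (t * exp (\<i> * \<rho> * complex_of_real (k * y))))"
proof -
  define L where "L = ln p"
  define \<delta> where "\<delta> = 1 - p*q"
  define cc where "cc n = pqpoch p q n" for n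
  define A where "A n = exp (- complex_of_real \<zeta> * complex_of_real (k^2 * real n^2)) * t^n / complex_of_real (cc n)" for n
  define w where "w n = \<i> * complex_of_real x + \<i> * \<rho> * complex_of_real (k * real n)" for n
  define f where "f n y = A n * exp (w n * complex_of_real y - complex_of_real (y^2/2))" for n and y :: real
  define M where "M n = norm (A n) * exp ((Im \<rho> * k * real n)^2/2)" for n
  define a where "a = - (L - (2 * \<zeta> - (Im \<rho>) ^ 2) * k ^ 2) / 2"
  define B where "B = norm t * exp (L/2) / \<delta>"
  have \<delta>: "\<delta> > 0" using assms by (simp add: \<delta>_def)
  have ccb0: "cc n \<ge> \<delta>^n * exp (- L * (real n * (real n + 1) / 2))" for n
    unfolding cc_def \<delta>_def L_def by (rule pqpoch_bound) (use assms in auto)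
  have ccpos: "cc n > 0" for n
    by (rule less_le_trans[OF _ ccb0]) (use \<delta> in simp)
  have ccb: "inverse (cc n) \<le> exp (L * (real n * (real n + 1) / 2)) / \<delta>^n" for n
  proof -
    have "inverse (cc n) \<le> inverse (\<delta>^n * exp (- L * (real n * (real n + 1) / 2)))"
      by (rule le_imp_inverse_le[OF ccb0]) (use \<delta> in simp)
    also have "\<dots> = exp (L * (real n * (real n + 1) / 2)) / \<delta>^n"
      by (simp only: mult_minus_left exp_minus inverse_mult_distrib inverse_inverse_eq divide_inverse mult.commute)
    finally show ?thesis .
  qed
  have apos: "a > 0"
  proof -
    have "exp (L + (- (2 * \<zeta> - (Im \<rho>) ^ 2) * k ^ 2)) < 1"
      using assms(1,6) by (simp add: L_def exp_add)
    then have "L + (- (2 * \<zeta> - (Im \<rho>) ^ 2) * k ^ 2) < 0" by simp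
    then show ?thesis by (simp add: a_def algebra_simps)
  qed
  have normA: "norm (A n) = exp (- \<zeta> * (k^2 * real n^2)) * norm t ^ n / cc n" for n
    using ccpos[of n] by (simp add: A_def norm_mult norm_divide norm_power)
  have Mb: "M n \<le> B^n * exp (- a * real n ^ 2)" for n
  proof -
    have "M n = exp (- \<zeta> * (k^2 * real n^2)) * norm t ^ n * exp ((Im \<rho> * k * real n)^2/2) * inverse (cc n)"
      by (simp add: M_def normA field_simps)
    also have "\<dots> \<le> exp (- \<zeta> * (k^2 * real n^2)) * norm t ^ n * exp ((Im \<rho> * k * real n)^2/2) * (exp (L * (real n * (real n + 1) / 2)) / \<delta>^n)"
      by (rule mult_left_mono[OF ccb]) simp
    also have "\<dots> = (norm t / \<delta>)^n * exp (- \<zeta> * (k^2 * real n^2) + (Im \<rho> * k * real n)^2/2 + L * (real n * (real n + 1) / 2))"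
      by (simp only: exp_add power_divide divide_inverse mult_ac power_mult_distrib power_inverse)
    also have "- \<zeta> * (k^2 * real n^2) + (Im \<rho> * k * real n)^2/2 + L * (real n * (real n + 1) / 2) = of_nat n * (L/2) + (- a * real n ^ 2)"
      by (simp add: a_def power2_eq_square field_simps)
    also have "(norm t / \<delta>)^n * exp (of_nat n * (L/2) + (- a * real n ^ 2)) = B^n * exp (- a * real n ^ 2)"
      by (simp only: exp_add exp_of_nat_mult B_def power_mult_distrib power_divide) (simp add: field_simps)
    finally show ?thesis .
  qed
  have Msum: "summable M"
  proof (rule summable_comparison_test[OF _ summable_gauss_seq[OF apos]])
    show "\<exists>N. \<forall>n\<ge>N. norm (M n) \<le> B^n * exp (- a * real n ^ 2)"
      using Mb by (auto simp: M_def)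
    show "B \<ge> 0" using \<delta> by (simp add: B_def)
  qed
  have Rew: "Re (w n) = - (Im \<rho> * k * real n)" for n by (simp add: w_def)
  have normf: "norm (f n y) = norm (A n) * exp (Re (w n) * y - y^2/2)" for n y
    by (simp add: f_def norm_mult)
  have fM: "norm (f n y) \<le> M n" for n y
  proof -
    have "Re (w n) * y - y^2/2 \<le> (Im \<rho> * k * real n)^2/2"
      using sum_squares_ge_zero[of "y - Re (w n)" 0]
      by (simp add: Rew power2_eq_square algebra_simps)
    then show ?thesis unfolding normf M_def by (intro mult_left_mono) auto
  qed
  have fint: "integrable lborel (f n)" for n
    unfolding f_def by (intro integrable_mult_right gaussC(1))
  have fintegral: "integral\<^sup>L lborel (f n) = A n * (complex_of_real (sqrt (2*pi)) * exp ((w n)^2/2))" for n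
    unfolding f_def by (simp only: integral_mult_right_zero gaussC(2))
  have nfintegral: "(\<integral>y. norm (f n y) \<partial>lborel) = sqrt (2*pi) * M n" for n
  proof -
    have "(\<integral>y. norm (f n y) \<partial>lborel) = (\<integral>y. norm (A n) * exp (Re (w n) * y - y^2/2) \<partial>lborel)"
      by (simp only: normf)
    also have "\<dots> = norm (A n) * (sqrt (2*pi) * exp ((Re (w n))^2/2))"
      by (simp add: gaussR(2))
    also have "\<dots> = sqrt (2*pi) * M n" by (simp add: M_def Rew power2_eq_square)
    finally show ?thesis .
  qed
  have psum: "summable (\<lambda>n. norm (f n y))" for y
    by (rule summable_comparison_test[OF _ Msum]) (use fM in auto)
  have isum: "summable (\<lambda>n. (\<integral>y. norm (f n y) \<partial>lborel))"
    unfolding nfintegral by (intro summable_mult Msum)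
  note S = integrable_suminf[OF fint _ isum] integral_suminf[OF fint _ isum] summable_integral[OF fint _ isum]
  define trm where "trm y n = exp (- complex_of_real \<zeta> * complex_of_real (k^2 * real n^2)) * (t * exp (\<i> * \<rho> * complex_of_real (k * y)))^n / complex_of_real (pqpoch p q n)" for y :: real and n
  have fid: "f n y = exp (\<i> * complex_of_real (x * y) - complex_of_real (y ^ 2 / 2)) * trm y n" for n y
    unfolding f_def A_def trm_def cc_def w_def by (rule fid_lemma)
  have integrand: "(\<lambda>y::real. exp (\<i> * complex_of_real (x * y) - complex_of_real (y ^ 2 / 2))
            * E_cplx k p q (complex_of_real \<zeta>) (t * exp (\<i> * \<rho> * complex_of_real (k * y)))) = (\<lambda>y. \<Sum>n. f n y)"
  proof
    fix y :: real
    let ?e = "exp (\<i> * complex_of_real (x * y) - complex_of_real (y ^ 2 / 2))"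
    have "summable (\<lambda>n. f n y)" by (rule summable_norm_cancel[OF psum])
    then have "summable (\<lambda>n. f n y / ?e)" by (rule summable_divide)
    then have st: "summable (trm y)" by (simp add: fid)
    have "?e * E_cplx k p q (complex_of_real \<zeta>) (t * exp (\<i> * \<rho> * complex_of_real (k * y))) = ?e * suminf (trm y)"
      by (simp only: E_cplx_def trm_def[abs_def])
    also have "\<dots> = (\<Sum>n. ?e * trm y n)" by (rule suminf_mult[OF st, symmetric])
    also have "\<dots> = (\<Sum>n. f n y)" by (simp add: fid)
    finally show "?e * E_cplx k p q (complex_of_real \<zeta>) (t * exp (\<i> * \<rho> * complex_of_real (k * y))) = (\<Sum>n. f n y)" .
  qed
  define e where "e = complex_of_real (exp (- (x ^ 2) / 2))"
  define T where "T n = exp (- (complex_of_real \<zeta> + \<rho>^2/2) * complex_of_real (k^2 * real n^2)) * (t * exp (- \<rho> * complex_of_real (k*x)))^n / complex_of_real (pqpoch p q n)" for n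
  have Tid: "T n * e = A n * exp ((w n)^2/2)" for n
    unfolding T_def e_def A_def w_def cc_def by (rule key_id)
  have s2: "complex_of_real (sqrt (2*pi)) \<noteq> 0" by simp
  have e0: "e \<noteq> 0" by (simp add: e_def)
  have T_eq: "T n = integral\<^sup>L lborel (f n) / (complex_of_real (sqrt (2*pi)) * e)" for n
    using Tid[of n] e0 s2 unfolding fintegral by (simp add: field_simps)
  have Tsum: "summable T"
    unfolding T_eq by (intro summable_divide S(3)) (use psum in auto)
  have Asum: "summable (\<lambda>n. A n * exp ((w n)^2/2))"
  proof -
    have "summable (\<lambda>n. T n * e)" by (intro summable_mult2 Tsum)
    then show ?thesis by (simp add: Tid)
  qed
  have LHS: "E_cplx k p q (complex_of_real \<zeta> + \<rho> ^ 2 / 2) (t * exp (- \<rho> * complex_of_real (k * x))) * e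
      = (\<Sum>n. A n * exp ((w n)^2/2))"
  proof -
    have "E_cplx k p q (complex_of_real \<zeta> + \<rho> ^ 2 / 2) (t * exp (- \<rho> * complex_of_real (k * x))) = suminf T"
      by (simp only: E_cplx_def T_def[abs_def])
    then show ?thesis using suminf_mult2[OF Tsum, of e] by (simp add: Tid)
  qed
  have RHS: "(\<integral>y. (\<Sum>n. f n y) \<partial>lborel) = complex_of_real (sqrt (2*pi)) * (\<Sum>n. A n * exp ((w n)^2/2))"
  proof -
    have "(\<integral>y. (\<Sum>n. f n y) \<partial>lborel) = (\<Sum>n. integral\<^sup>L lborel (f n))" by (rule S(2)) (use psum in auto)
    also have "\<dots> = (\<Sum>n. complex_of_real (sqrt (2*pi)) * (A n * exp ((w n)^2/2)))"
      by (simp add: fintegral mult_ac)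
    also have "\<dots> = complex_of_real (sqrt (2*pi)) * (\<Sum>n. A n * exp ((w n)^2/2))"
      by (rule suminf_mult[OF Asum])
    finally show ?thesis .
  qed
  show ?thesis
    unfolding integrand
  proof
    show "integrable lborel (\<lambda>y. \<Sum>n. f n y)" by (rule S(1)) (use psum in auto)
    show "E_cplx k p q (complex_of_real \<zeta> + \<rho> ^ 2 / 2) (t * exp (- \<rho> * complex_of_real (k * x))) * complex_of_real (exp (- (x ^ 2) / 2))
      = complex_of_real (1 / sqrt (2 * pi)) * (\<integral>y. (\<Sum>n. f n y) \<partial>lborel)"
      using LHS unfolding RHS e_def by simp
  qed
qed

end
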